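(* Let $\Omega=\mathbb{C}[x_1,\dots,x_n]\otimes\wedge\mathbb{C}^n$ and let $\mathcal{I}_n$ be its ideal generated by $p_1,\dots,p_n,dp_1,\dots,dp_n$, where $p_j=\sum_ix_i^j$ and $d$ is the exterior derivative. Let $1\le r\le n$. If $f\in\mathbb{C}[x_r,\dots,x_n]$ is homogeneous of degree $l>(r-2)(n-r+1)$, then $f\,dx_r\wedge\cdots\wedge dx_n\in\mathcal{I}_n$. *)

theory Defs
  imports Complex_Main "HOL-Library.Poly_Mapping"
begin

text \<open>Polynomials in countably many variables x_i (i :: nat) over the complex numbers:
  a monomial is an exponent vector (finitely supported nat-valued map), a polynomial a finitely supported
  coefficient map.\<close>
type_synonym mpoly = "(nat \<Rightarrow>\<^sub>0 nat) \<Rightarrow>\<^sub>0 complex"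

text \<open>A polynomial differential form: the coefficient of dx_S (S a finite set of indices,
  dx_S = dx_{s1} wedge ... wedge dx_{sk} with s1 < ... < sk) is given by the function value at S.\<close>
type_synonym pform = "nat set \<Rightarrow> mpoly"

definition var :: "nat \<Rightarrow> mpoly" where
  "var i = Poly_Mapping.single (Poly_Mapping.single i 1) 1"

definition pdiff :: "nat \<Rightarrow> mpoly \<Rightarrow> mpoly" where
  "pdiff i f = (\<Sum>(m::nat \<Rightarrow>\<^sub>0 nat)\<in>Poly_Mapping.keys f. Poly_Mapping.single (m - Poly_Mapping.single i 1)
                                 (of_nat (Poly_Mapping.lookup m i) * Poly_Mapping.lookup f m :: complex))"

text \<open>Sign of dx_S wedge dx_T, rewritten in increasing order (number of inversions).\<close>
definition wsign :: "nat set \<Rightarrow> nat set \<Rightarrow> int" where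
  "wsign S T = (-1) ^ card {(s,t). s \<in> S \<and> t \<in> T \<and> t < s}"

definition wedge :: "pform \<Rightarrow> pform \<Rightarrow> pform" where
  "wedge \<omega> \<eta> U = (\<Sum>S\<in>Pow U. of_int (wsign S (U - S)) * \<omega> S * \<eta> (U - S))"

definition ext_d :: "pform \<Rightarrow> pform" where
  "ext_d \<omega> U = (\<Sum>i\<in>U. of_int (wsign {i} (U - {i})) * pdiff i (\<omega> (U - {i})))"

definition zero_form :: "mpoly \<Rightarrow> pform" where
  "zero_form f = (\<lambda>S. if S = {} then f else 0)"

definition Omega :: "nat \<Rightarrow> pform set" where
  "Omega n = {\<omega>. \<forall>S. \<omega> S \<noteq> 0 \<longrightarrow> S \<subseteq> {1..n} \<and> (\<forall>m\<in>Poly_Mapping.keys (\<omega> S). Poly_Mapping.keys m \<subseteq> {1..n})}"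

inductive_set gen_ideal :: "nat \<Rightarrow> pform set \<Rightarrow> pform set" for n G where
  gen: "g \<in> G \<Longrightarrow> g \<in> gen_ideal n G"
| zero: "(\<lambda>U. 0) \<in> gen_ideal n G"
| add: "a \<in> gen_ideal n G \<Longrightarrow> b \<in> gen_ideal n G \<Longrightarrow> (\<lambda>U. a U + b U) \<in> gen_ideal n G"
| lmult: "a \<in> gen_ideal n G \<Longrightarrow> \<omega> \<in> Omega n \<Longrightarrow> wedge \<omega> a \<in> gen_ideal n G"
| rmult: "a \<in> gen_ideal n G \<Longrightarrow> \<omega> \<in> Omega n \<Longrightarrow> wedge a \<omega> \<in> gen_ideal n G"

definition power_sum :: "nat \<Rightarrow> nat \<Rightarrow> mpoly" where
  "power_sum n j = (\<Sum>i=1..n. var i ^ j)"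

definition I_n :: "nat \<Rightarrow> pform set" where
  "I_n n = gen_ideal n ((\<lambda>j. zero_form (power_sum n j)) ` {1..n}
                      \<union> (\<lambda>j. ext_d (zero_form (power_sum n j))) ` {1..n})"

definition homogeneous_in :: "nat set \<Rightarrow> nat \<Rightarrow> mpoly \<Rightarrow> bool" where
  "homogeneous_in V l f \<longleftrightarrow> (\<forall>m\<in>Poly_Mapping.keys f. Poly_Mapping.keys m \<subseteq> V \<and> (\<Sum>i\<in>Poly_Mapping.keys m. Poly_Mapping.lookup m i) = l)"

end

theory Submission
  imports Defs
begin


definition vars :: "mpoly \<Rightarrow> nat set" where
  "vars p = (\<Union>m\<in>Poly_Mapping.keys p. Poly_Mapping.keys m)"

definition deg :: "(nat \<Rightarrow>\<^sub>0 nat) \<Rightarrow> nat" where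
  "deg a = (\<Sum>i\<in>Poly_Mapping.keys a. Poly_Mapping.lookup a i)"

lemma lookup_minus_nat: "Poly_Mapping.lookup (f - g) k = Poly_Mapping.lookup f k - Poly_Mapping.lookup (g::nat\<Rightarrow>\<^sub>0nat) k"
  by (rule lookup_minus)

lemma keys_add_nat: "Poly_Mapping.keys (a + b) = Poly_Mapping.keys a \<union> Poly_Mapping.keys (b::nat\<Rightarrow>\<^sub>0nat)"
  by (auto simp: in_keys_iff lookup_add)

lemma deg_superset: "finite K \<Longrightarrow> Poly_Mapping.keys a \<subseteq> K \<Longrightarrow> deg a = (\<Sum>i\<in>K. Poly_Mapping.lookup a i)"
  unfolding deg_def by (rule sum.mono_neutral_left) (auto simp: in_keys_iff)

lemma deg_add: "deg (a + b) = deg a + deg b"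
proof -
  let ?K = "Poly_Mapping.keys a \<union> Poly_Mapping.keys b"
  have "deg (a+b) = (\<Sum>i\<in>?K. Poly_Mapping.lookup (a+b) i)"
    by (rule deg_superset) (auto simp: keys_add_nat)
  also have "\<dots> = (\<Sum>i\<in>?K. Poly_Mapping.lookup a i) + (\<Sum>i\<in>?K. Poly_Mapping.lookup b i)"
    by (simp add: lookup_add sum.distrib)
  also have "\<dots> = deg a + deg b"
    by (simp add: deg_superset[symmetric])
  finally show ?thesis .
qed

lemma deg_single1: "deg (Poly_Mapping.single i 1) = 1"
  by (simp add: deg_def)

lemma deg_single[simp]: "deg (Poly_Mapping.single i k) = k"
  by (simp add: deg_def)

lemma deg_zero[simp]: "deg 0 = 0"
  by (simp add: deg_def)

lemma pdiff_expand:
  assumes "finite K" "Poly_Mapping.keys f \<subseteq> K"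
  shows "pdiff i f = (\<Sum>m\<in>K. Poly_Mapping.single (m - Poly_Mapping.single i 1)
                                 (of_nat (Poly_Mapping.lookup m i) * Poly_Mapping.lookup f m))"
  unfolding pdiff_def
  by (rule sum.mono_neutral_left) (use assms in \<open>auto simp: in_keys_iff\<close>)

lemma pdiff_add: "pdiff i (f + g) = pdiff i f + pdiff i g"
proof -
  let ?K = "Poly_Mapping.keys f \<union> Poly_Mapping.keys g"
  have "pdiff i (f+g) = (\<Sum>m\<in>?K. Poly_Mapping.single (m - Poly_Mapping.single i 1)
                                 (of_nat (Poly_Mapping.lookup m i) * Poly_Mapping.lookup (f+g) m))"
    by (rule pdiff_expand) (auto dest: subsetD[OF keys_add])
  also have "\<dots> = (\<Sum>m\<in>?K. Poly_Mapping.single (m - Poly_Mapping.single i 1)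
                                 (of_nat (Poly_Mapping.lookup m i) * Poly_Mapping.lookup f m))
     + (\<Sum>m\<in>?K. Poly_Mapping.single (m - Poly_Mapping.single i 1)
                                 (of_nat (Poly_Mapping.lookup m i) * Poly_Mapping.lookup g m))"
    by (simp add: lookup_add distrib_left single_add sum.distrib)
  also have "\<dots> = pdiff i f + pdiff i g"
    by (simp add: pdiff_expand[of ?K f i] pdiff_expand[of ?K g i])
  finally show ?thesis .
qed

lemma pdiff_zero[simp]: "pdiff i 0 = 0"
  by (simp add: pdiff_def)

lemma pdiff_sum: "pdiff i (sum F A) = (\<Sum>x\<in>A. pdiff i (F x))"
  by (induction A rule: infinite_finite_induct) (auto simp: pdiff_add)

lemma pdiff_single: "pdiff i (Poly_Mapping.single a c) =
   Poly_Mapping.single (a - Poly_Mapping.single i 1) (of_nat (Poly_Mapping.lookup a i) * c)"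
  by (subst pdiff_expand[of "{a}"]) auto

lemma poly_expand: "(p::'a \<Rightarrow>\<^sub>0 'b::comm_monoid_add) = (\<Sum>a\<in>Poly_Mapping.keys p. Poly_Mapping.single a (Poly_Mapping.lookup p a))"
  by (rule poly_mapping_eqI) (simp add: lookup_sum lookup_single when_def in_keys_iff)

lemma pdiff_uminus: "pdiff i (- f) = - pdiff i f"
  by (metis add_eq_0_iff pdiff_add pdiff_zero add.right_inverse)

lemma pdiff_minus: "pdiff i (f - g) = pdiff i f - pdiff i g"
  by (simp only: diff_conv_add_uminus pdiff_add pdiff_uminus)

lemma sub_single_add:
  assumes "0 < Poly_Mapping.lookup a i"
  shows "a - Poly_Mapping.single i 1 + b = a + b - Poly_Mapping.single i (1::nat)"
  using assms by (intro poly_mapping_eqI) (auto simp: lookup_add lookup_minus lookup_single when_def)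

lemma single_sub_zero: "Poly_Mapping.lookup a i = 0 \<Longrightarrow>
   Poly_Mapping.single (a - Poly_Mapping.single i 1) (of_nat (Poly_Mapping.lookup a i) * c) = (0::mpoly)"
  by simp

lemma pdiff_single_mult:
  "pdiff i (Poly_Mapping.single a c * Poly_Mapping.single b d) =
   pdiff i (Poly_Mapping.single a c) * Poly_Mapping.single b d + Poly_Mapping.single a c * pdiff i (Poly_Mapping.single b d)"
proof -
  let ?s = "Poly_Mapping.single i (1::nat)"
  have l: "Poly_Mapping.lookup (a+b) i = Poly_Mapping.lookup a i + Poly_Mapping.lookup b i"
    by (simp add: lookup_add)
  have A: "Poly_Mapping.single (a + b - ?s) (of_nat (Poly_Mapping.lookup a i) * (c*d)) =
           Poly_Mapping.single (a - ?s + b) (of_nat (Poly_Mapping.lookup a i) * c * d)"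
  proof (cases "0 < Poly_Mapping.lookup a i")
    case True
    have e: "a + b - ?s = a - ?s + b" using sub_single_add[OF True] by simp
    show ?thesis unfolding e by (simp add: mult.assoc)
  qed simp
  have B: "Poly_Mapping.single (a + b - ?s) (of_nat (Poly_Mapping.lookup b i) * (c*d)) =
           Poly_Mapping.single (a + (b - ?s)) (c * (of_nat (Poly_Mapping.lookup b i) * d))"
  proof (cases "0 < Poly_Mapping.lookup b i")
    case True
    then have "b - ?s + a = b + a - ?s" by (rule sub_single_add)
    then have "a + (b - ?s) = a + b - ?s" by (simp add: add.commute)
    then show ?thesis by (simp add: mult.left_commute)
  qed simp
  have "pdiff i (Poly_Mapping.single a c * Poly_Mapping.single b d) =
     Poly_Mapping.single (a + b - ?s) (of_nat (Poly_Mapping.lookup a i) * (c*d))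
     + Poly_Mapping.single (a + b - ?s) (of_nat (Poly_Mapping.lookup b i) * (c*d))"
    by (simp add: pdiff_single mult_single l distrib_right single_add)
  also have "\<dots> = pdiff i (Poly_Mapping.single a c) * Poly_Mapping.single b d + Poly_Mapping.single a c * pdiff i (Poly_Mapping.single b d)"
    unfolding A B by (simp add: pdiff_single mult_single)
  finally show ?thesis .
qed

lemma pdiff_mult: "pdiff i (f * g) = pdiff i f * g + f * pdiff i g"
proof -
  let ?s = "\<lambda>p a. Poly_Mapping.single a (Poly_Mapping.lookup p a)"
  have "f * g = (\<Sum>a\<in>Poly_Mapping.keys f. ?s f a) * (\<Sum>b\<in>Poly_Mapping.keys g. ?s g b)"
    by (simp add: poly_expand[symmetric])
  also have "\<dots> = (\<Sum>a\<in>Poly_Mapping.keys f. \<Sum>b\<in>Poly_Mapping.keys g. ?s f a * ?s g b)"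
    by (simp add: sum_distrib_left sum_distrib_right sum.swap[of _ "Poly_Mapping.keys g"])
  finally have fg: "f * g = \<dots>" .
  have "pdiff i (f*g) = (\<Sum>a\<in>Poly_Mapping.keys f. \<Sum>b\<in>Poly_Mapping.keys g.
        pdiff i (?s f a) * ?s g b + ?s f a * pdiff i (?s g b))"
    by (simp add: fg pdiff_sum pdiff_single_mult)
  also have "\<dots> = (\<Sum>a\<in>Poly_Mapping.keys f. pdiff i (?s f a)) * (\<Sum>b\<in>Poly_Mapping.keys g. ?s g b)
     + (\<Sum>a\<in>Poly_Mapping.keys f. ?s f a) * (\<Sum>b\<in>Poly_Mapping.keys g. pdiff i (?s g b))"
    by (simp add: sum.distrib sum_product)
  also have "\<dots> = pdiff i f * g + f * pdiff i g"
    by (simp add: pdiff_sum[symmetric] poly_expand[symmetric])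
  finally show ?thesis .
qed

lemma pdiff_var: "pdiff i (var v) = (if i = v then 1 else 0)"
  by (auto simp: var_def pdiff_single lookup_single when_def)

lemma pdiff_notvar: "i \<notin> vars f \<Longrightarrow> pdiff i f = 0"
  unfolding pdiff_def vars_def
  by (rule sum.neutral) (auto simp: in_keys_iff)

lemma pdiff_nonzero_var: "pdiff i f \<noteq> 0 \<Longrightarrow> i \<in> vars f"
  using pdiff_notvar by blast

lemma vars_add: "vars (p + q) \<subseteq> vars p \<union> vars q"
  unfolding vars_def using keys_add[of p q] by auto

lemma vars_mult: "vars (p * q) \<subseteq> vars p \<union> vars q"
proof
  fix x assume "x \<in> vars (p * q)"
  then obtain m where m: "m \<in> Poly_Mapping.keys (p*q)" "x \<in> Poly_Mapping.keys m"
    by (auto simp: vars_def)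
  then obtain a b where ab: "m = a + b" "a \<in> Poly_Mapping.keys p" "b \<in> Poly_Mapping.keys q"
    using keys_mult[of p q] by blast
  then have "x \<in> Poly_Mapping.keys a \<or> x \<in> Poly_Mapping.keys b" using m(2) by (simp add: keys_add_nat)
  then show "x \<in> vars p \<union> vars q" using ab by (auto simp: vars_def)
qed

lemma vars_sum: "vars (sum F A) \<subseteq> (\<Union>x\<in>A. vars (F x))"
proof (induction A rule: infinite_finite_induct)
  case (insert x A')
  then show ?case using vars_add[of "F x" "sum F A'"] by auto
qed (auto simp: vars_def)

lemma keys_minus_sub: "Poly_Mapping.keys (a - b) \<subseteq> Poly_Mapping.keys (a::nat\<Rightarrow>\<^sub>0nat)"
  by (auto simp: in_keys_iff lookup_minus)

lemma vars_single: "vars (Poly_Mapping.single a c) \<subseteq> Poly_Mapping.keys a"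
  by (auto simp: vars_def)

lemma vars_one[simp]: "vars 1 = {}"
  by (simp add: vars_def)

lemma vars_zero[simp]: "vars 0 = {}"
  by (simp add: vars_def)

lemma vars_var: "vars (var i) = {i}"
  by (simp add: vars_def var_def)

lemma vars_uminus[simp]: "vars (- p) = vars p"
  by (simp add: vars_def keys_minus)

lemma vars_of_int: "vars (of_int k) = {}"
proof -
  have "(of_int k::mpoly) = Poly_Mapping.single 0 (of_int k)" by simp
  then show ?thesis using vars_single[of 0 "of_int k"] by auto
qed

lemma vars_power: "vars (p ^ k) \<subseteq> vars p"
proof (induction k)
  case (Suc k)
  have "vars (p^Suc k) \<subseteq> vars p \<union> vars (p^k)" using vars_mult[of p "p^k"] by (simp only: power_Suc)
  then show ?case using Suc by blast
qed simp

lemma vars_pdiff: "vars (pdiff i f) \<subseteq> vars f"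
proof -
  have "vars (pdiff i f) \<subseteq> (\<Union>m\<in>Poly_Mapping.keys f. vars (Poly_Mapping.single (m - Poly_Mapping.single i 1)
                                 (of_nat (Poly_Mapping.lookup m i) * Poly_Mapping.lookup f m)))"
    unfolding pdiff_def by (rule vars_sum)
  also have "\<dots> \<subseteq> vars f"
  proof (rule UN_least)
    fix m assume m: "m \<in> Poly_Mapping.keys f"
    have "vars (Poly_Mapping.single (m - Poly_Mapping.single i 1)
             (of_nat (Poly_Mapping.lookup m i) * Poly_Mapping.lookup f m)) \<subseteq> Poly_Mapping.keys (m - Poly_Mapping.single i 1)"
      by (rule vars_single)
    also have "\<dots> \<subseteq> Poly_Mapping.keys m" by (rule keys_minus_sub)
    also have "\<dots> \<subseteq> vars f" using m by (auto simp: vars_def)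
    finally show "vars (Poly_Mapping.single (m - Poly_Mapping.single i 1)
             (of_nat (Poly_Mapping.lookup m i) * Poly_Mapping.lookup f m)) \<subseteq> vars f" .
  qed
  finally show ?thesis .
qed




fun hl :: "nat list \<Rightarrow> nat \<Rightarrow> mpoly" where
  "hl [] 0 = 1"
| "hl [] (Suc k) = 0"
| "hl (v # X) 0 = 1"
| "hl (v # X) (Suc k) = hl X (Suc k) + var v * hl (v # X) k"

lemma hl_0[simp]: "hl X 0 = 1"
  by (cases X) auto

lemma hl_Cons_Suc: "hl (v # X) (Suc k) = hl X (Suc k) + var v * hl (v # X) k"
  by simp



lemma hl_swap: "hl (a # b # X) k = hl (b # a # X) k"
proof (induction k rule: less_induct)
  case (less k)
  show ?case
  proof (cases k)
    case 0 then show ?thesis by simp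
  next
    case (Suc k')
    show ?thesis
    proof (cases k')
      case 0
      then show ?thesis using Suc by (simp add: algebra_simps)
    next
      case (Suc k'')
      have W: "hl (a # b # X) k' = hl (b # a # X) k'" using less \<open>k = Suc k'\<close> by simp
      have Z: "hl (a # b # X) k'' = hl (b # a # X) k''" using less \<open>k = Suc k'\<close> Suc by simp
      have e1: "hl (a # b # X) k' = hl (b # X) k' + var a * hl (a # b # X) k''" using Suc by simp
      have e2: "hl (b # a # X) k' = hl (a # X) k' + var b * hl (b # a # X) k''" using Suc by simp
      have f1: "hl (b # X) k' = hl (a # b # X) k' - var a * hl (a # b # X) k''" using e1 by simp
      have f2: "hl (a # X) k' = hl (a # b # X) k' - var b * hl (a # b # X) k''" using e2 W Z by simp
      have "hl (a # b # X) k = hl X k + var b * hl (b # X) k' + var a * hl (a # b # X) k'"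
        using \<open>k = Suc k'\<close> by simp
      also have "\<dots> = hl X k + var b * (hl (a # b # X) k' - var a * hl (a # b # X) k'') + var a * hl (a # b # X) k'"
        by (simp only: f1)
      also have "\<dots> = hl X k + var a * (hl (a # b # X) k' - var b * hl (a # b # X) k'') + var b * hl (a # b # X) k'"
        by (simp add: algebra_simps)
      also have "\<dots> = hl X k + var a * hl (a # X) k' + var b * hl (b # a # X) k'"
        by (simp only: f2 W)
      also have "\<dots> = hl (b # a # X) k"
        using \<open>k = Suc k'\<close> by simp
      finally show ?thesis .
    qed
  qed
qed

lemma hl_cong: "(\<And>k. hl X k = hl X' k) \<Longrightarrow> hl (x # X) k = hl (x # X') k"
  by (induction k) auto

lemma hl_move: "hl (xs @ y # ys) k = hl (y # xs @ ys) k"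
proof (induction xs arbitrary: k)
  case Nil then show ?case by (simp only: append.simps)
next
  case (Cons x xs)
  have "hl ((x # xs) @ y # ys) k = hl (x # (xs @ y # ys)) k" by (simp only: append.simps)
  also have "\<dots> = hl (x # y # xs @ ys) k"
    by (rule hl_cong) (rule Cons.IH)
  also have "\<dots> = hl (y # x # xs @ ys) k" by (rule hl_swap)
  finally show ?case by (simp only: append.simps)
qed

lemma keys_var_mult: "Poly_Mapping.keys (var v * p) \<subseteq> (\<lambda>b. Poly_Mapping.single v 1 + b) ` Poly_Mapping.keys p"
  using keys_mult[of "var v" p] by (auto simp: var_def)

lemma hl_keys: "b \<in> Poly_Mapping.keys (hl X k) \<Longrightarrow> deg b = k \<and> Poly_Mapping.keys b \<subseteq> set X"
proof (induction X k arbitrary: b rule: hl.induct)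
  case 1 then show ?case by simp
next
  case (2 k) then show ?case by simp
next
  case (3 v X) then show ?case by simp
next
  case (4 v X k)
  from "4.prems" have "b \<in> Poly_Mapping.keys (hl X (Suc k)) \<or> b \<in> Poly_Mapping.keys (var v * hl (v # X) k)"
    using keys_add[of "hl X (Suc k)" "var v * hl (v # X) k"] by auto
  then show ?case
  proof
    assume "b \<in> Poly_Mapping.keys (hl X (Suc k))"
    then show ?thesis using "4.IH"(1) by auto
  next
    assume "b \<in> Poly_Mapping.keys (var v * hl (v # X) k)"
    then obtain b' where b': "b = Poly_Mapping.single v 1 + b'" "b' \<in> Poly_Mapping.keys (hl (v # X) k)"
      using keys_var_mult by blast
    then show ?thesis using "4.IH"(2)[OF b'(2)] by (auto simp: deg_add deg_single1 keys_add_nat)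
  qed
qed

lemma vars_hl: "vars (hl X k) \<subseteq> set X"
  using hl_keys unfolding vars_def by blast

lemma pdiff_hl:
  assumes "distinct V" "i \<in> set V"
  shows "pdiff i (hl V (Suc k)) = hl (i # V) k"
  using assms
proof (induction V arbitrary: k)
  case Nil then show ?case by simp
next
  case (Cons v X)
  show ?case
  proof (cases "i = v")
    case True
    then have iX: "i \<notin> set X" using Cons.prems by auto
    have z: "pdiff i (hl X (Suc k')) = 0" for k'
      by (rule pdiff_notvar) (use vars_hl iX in blast)
    show ?thesis
    proof (induction k)
      case 0 then show ?case using True z by (simp add: pdiff_add pdiff_mult pdiff_var)
    next
      case (Suc k)
      have "pdiff i (hl (v # X) (Suc (Suc k))) = hl (v # X) (Suc k) + var v * pdiff i (hl (v # X) (Suc k))"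
        using True z by (simp add: pdiff_add pdiff_mult pdiff_var)
      also have "\<dots> = hl (v # X) (Suc k) + var v * hl (i # v # X) k" using Suc by simp
      also have "\<dots> = hl (i # v # X) (Suc k)" using True by simp
      finally show ?case .
    qed
  next
    case False
    then have iX: "i \<in> set X" "distinct X" using Cons.prems by auto
    show ?thesis
    proof (induction k)
      case 0 then show ?case using False Cons.IH[OF iX(2) iX(1)] by (simp add: pdiff_add pdiff_mult pdiff_var)
    next
      case (Suc k)
      have "pdiff i (hl (v # X) (Suc (Suc k))) = hl (i # X) (Suc k) + var v * pdiff i (hl (v # X) (Suc k))"
        using False Cons.IH[OF iX(2) iX(1)] by (simp add: pdiff_add pdiff_mult pdiff_var)
      also have "\<dots> = hl (i # X) (Suc k) + var v * hl (i # v # X) k" using Suc by simp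
      also have "\<dots> = hl (v # i # X) (Suc k)" using hl_swap[of i v X k] by simp
      also have "\<dots> = hl (i # v # X) (Suc k)" by (rule hl_swap)
      finally show ?case .
    qed
  qed
qed

lemma hl_sum_ident:
  assumes "distinct V"
  shows "(\<Sum>i\<in>set V. hl (i # V) k) = of_nat (length V + k) * hl V k"
  using assms
proof (induction V arbitrary: k)
  case Nil then show ?case by (cases k) auto
next
  case (Cons v X)
  then have vX: "v \<notin> set X" and dX: "distinct X" by auto
  define T where "T k = (\<Sum>i\<in>set X. hl (i # v # X) k)" for k
  have T0: "T 0 = of_nat (length X)" by (simp add: T_def distinct_card[OF dX])
  have TS: "T (Suc k) = of_nat (length X + Suc k) * hl X (Suc k) + var v * T k" for k
  proof -
    have "T (Suc k) = (\<Sum>i\<in>set X. hl (v # i # X) (Suc k))"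
      unfolding T_def by (rule sum.cong[OF refl]) (rule hl_swap)
    also have "\<dots> = (\<Sum>i\<in>set X. hl (i # X) (Suc k) + var v * hl (v # i # X) k)"
      by (simp only: hl_Cons_Suc)
    also have "\<dots> = (\<Sum>i\<in>set X. hl (i # X) (Suc k)) + var v * T k"
      unfolding sum.distrib sum_distrib_left T_def by (simp only: hl_swap)
    finally show ?thesis by (simp only: Cons.IH[OF dX])
  qed
  have main: "hl (v # v # X) k + T k = of_nat (length X + 1 + k) * hl (v # X) k"
  proof (induction k)
    case 0 then show ?case by (simp add: T0)
  next
    case (Suc k)
    have "hl (v # v # X) (Suc k) + T (Suc k) = hl (v # X) (Suc k) + of_nat (length X + Suc k) * hl X (Suc k)
          + var v * (hl (v # v # X) k + T k)"
      by (simp add: TS algebra_simps)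
    also have "\<dots> = hl (v # X) (Suc k) + of_nat (length X + Suc k) * (hl X (Suc k) + var v * hl (v # X) k)"
      using Suc by (simp add: algebra_simps)
    also have "\<dots> = of_nat (length X + 1 + Suc k) * hl (v # X) (Suc k)"
      by (simp add: algebra_simps)
    finally show ?case .
  qed
  have "(\<Sum>i\<in>set (v # X). hl (i # v # X) k) = hl (v # v # X) k + T k"
    using vX by (simp add: T_def)
  then show ?case using main by simp
qed

lemma hl_euler:
  assumes "distinct V"
  shows "(\<Sum>i\<in>set V. var i * hl (i # V) k) = of_nat (Suc k) * hl V (Suc k)"
  using assms
proof (induction V arbitrary: k)
  case Nil then show ?case by simp
next
  case (Cons v X)
  then have vX: "v \<notin> set X" and dX: "distinct X" by auto
  define T where "T k = (\<Sum>i\<in>set X. var i * hl (i # v # X) k)" for k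
  have T0: "T 0 = hl X 1" using Cons.IH[OF dX, of 0] by (simp add: T_def)
  have TS: "T (Suc k) = of_nat (Suc (Suc k)) * hl X (Suc (Suc k)) + var v * T k" for k
  proof -
    have "T (Suc k) = (\<Sum>i\<in>set X. var i * hl (v # i # X) (Suc k))"
      unfolding T_def by (intro sum.cong refl arg_cong2[where f="(*)"] hl_swap)
    also have "\<dots> = (\<Sum>i\<in>set X. var i * (hl (i # X) (Suc k) + var v * hl (v # i # X) k))"
      by (simp only: hl_Cons_Suc)
    also have "\<dots> = (\<Sum>i\<in>set X. var i * hl (i # X) (Suc k) + var v * (var i * hl (v # i # X) k))"
      by (simp only: algebra_simps)
    also have "\<dots> = (\<Sum>i\<in>set X. var i * hl (i # X) (Suc k)) + var v * T k"
      unfolding sum.distrib sum_distrib_left T_def by (simp only: hl_swap)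
    finally show ?thesis by (simp only: Cons.IH[OF dX])
  qed
  have main: "var v * hl (v # v # X) k + T k = of_nat (Suc k) * hl (v # X) (Suc k)"
  proof (induction k)
    case 0 then show ?case by (simp add: T0)
  next
    case (Suc k)
    have "var v * hl (v # v # X) (Suc k) + T (Suc k) = var v * hl (v # X) (Suc k)
          + of_nat (Suc (Suc k)) * hl X (Suc (Suc k)) + var v * (var v * hl (v # v # X) k + T k)"
      by (simp add: TS algebra_simps)
    also have "\<dots> = var v * hl (v # X) (Suc k) + of_nat (Suc (Suc k)) * hl X (Suc (Suc k))
          + var v * (of_nat (Suc k) * hl (v # X) (Suc k))"
      using Suc by simp
    also have "\<dots> = of_nat (Suc (Suc k)) * (hl X (Suc (Suc k)) + var v * hl (v # X) (Suc k))"
      by (simp add: algebra_simps)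
    also have "\<dots> = of_nat (Suc (Suc k)) * hl (v # X) (Suc (Suc k))" by simp
    finally show ?case .
  qed
  have "(\<Sum>i\<in>set (v # X). var i * hl (i # v # X) k) = var v * hl (v # v # X) k + T k"
    using vX by (simp add: T_def)
  then show ?case using main by simp
qed

lemma hl_Cons_expand: "hl (i # V) k = (\<Sum>j\<le>k. var i ^ j * hl V (k - j))"
proof (induction k)
  case 0 then show ?case by simp
next
  case (Suc k)
  have "(\<Sum>j\<le>Suc k. var i ^ j * hl V (Suc k - j)) = hl V (Suc k) + (\<Sum>j\<le>k. var i ^ Suc j * hl V (Suc k - Suc j))"
    by (subst sum.atMost_Suc_shift) simp
  also have "\<dots> = hl V (Suc k) + var i * (\<Sum>j\<le>k. var i ^ j * hl V (k - j))"
    by (simp add: sum_distrib_left algebra_simps)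
  finally show ?case using Suc by simp
qed

definition pl :: "nat list \<Rightarrow> nat \<Rightarrow> mpoly" where
  "pl V j = (\<Sum>i\<in>set V. var i ^ j)"

lemma newton:
  assumes "distinct V"
  shows "of_nat (Suc k) * hl V (Suc k) = (\<Sum>j\<le>k. pl V (Suc j) * hl V (k - j))"
proof -
  have "of_nat (Suc k) * hl V (Suc k) = (\<Sum>i\<in>set V. var i * hl (i # V) k)"
    using hl_euler[OF assms] by simp
  also have "\<dots> = (\<Sum>i\<in>set V. \<Sum>j\<le>k. var i ^ Suc j * hl V (k - j))"
    by (simp add: hl_Cons_expand sum_distrib_left mult.assoc)
  also have "\<dots> = (\<Sum>j\<le>k. pl V (Suc j) * hl V (k - j))"
    by (subst sum.swap) (simp add: pl_def sum_distrib_right)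
  finally show ?thesis .
qed



inductive hN :: "nat list \<Rightarrow> (nat \<Rightarrow> nat) \<Rightarrow> nat \<Rightarrow> nat \<Rightarrow> mpoly \<Rightarrow> bool" for V \<kappa> R where
  gen: "i \<in> set V \<Longrightarrow> \<kappa> i \<le> Suc k \<Longrightarrow> Suc k \<le> R \<Longrightarrow> hN V \<kappa> R k (hl (i # V) k)"
| add: "hN V \<kappa> R d p \<Longrightarrow> hN V \<kappa> R d q \<Longrightarrow> hN V \<kappa> R d (p + q)"
| mon: "hN V \<kappa> R d p \<Longrightarrow> Poly_Mapping.keys a \<subseteq> set V \<Longrightarrow> hN V \<kappa> R (d + deg a) (Poly_Mapping.single a c * p)"

lemma hN_smult: "hN V \<kappa> R d p \<Longrightarrow> hN V \<kappa> R d (Poly_Mapping.single 0 c * p)"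
  using hN.mon[of V \<kappa> R d p 0 c] by simp

lemma hN_zero: "hN V \<kappa> R d p \<Longrightarrow> hN V \<kappa> R d 0"
  using hN_smult[of V \<kappa> R d p 0] by simp

lemma hN_sum:
  assumes "hN V \<kappa> R d p0" "finite A" "\<forall>x\<in>A. hN V \<kappa> R d (F x)"
  shows "hN V \<kappa> R d (sum F A)"
  using assms(2,3)
proof (induction A rule: finite_induct)
  case empty then show ?case using hN_zero[OF assms(1)] by simp
next
  case (insert x A) then show ?case by (simp add: hN.add)
qed

lemma hN_var: "j \<in> set V \<Longrightarrow> hN V \<kappa> R d p \<Longrightarrow> hN V \<kappa> R (Suc d) (var j * p)"
  using hN.mon[of V \<kappa> R d p "Poly_Mapping.single j 1" 1] by (simp add: var_def)

lemma hN_step: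
  assumes dV: "distinct V" and jV: "j \<in> set V" and mx: "\<forall>i\<in>set V. \<kappa> i \<le> \<kappa> j"
    and two: "2 \<le> \<kappa> j" and jR: "\<kappa> j \<le> R"
  shows "hN V (\<kappa>(j := \<kappa> j - 1)) R d p \<Longrightarrow> hN V \<kappa> R (Suc d) (var j * p)"
proof (induction rule: hN.induct)
  case (gen i k)
  show ?case
  proof (cases "\<kappa> i \<le> Suc k")
    case True
    then show ?thesis using gen hN.gen[of i V \<kappa> k R] hN_var[OF jV] by blast
  next
    case False
    then have ij: "i = j" using gen(2) by (cases "i = j") auto
    then have kj: "\<kappa> j = Suc (Suc k)" using gen(2) False by auto
    have e: "var j * hl (j # V) k = hl (j # V) (Suc k) + - hl V (Suc k)"
      by (simp add: hl_Cons_Suc)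
    have g1: "hN V \<kappa> R (Suc k) (hl (j # V) (Suc k))"
      by (rule hN.gen) (use jV kj jR in auto)
    define N :: complex where "N = of_nat (length V + Suc k)"
    define c :: complex where "c = - 1 / N"
    have N0: "N \<noteq> 0" unfolding N_def of_nat_eq_0_iff by simp
    have eqN: "(of_nat (length V + Suc k)::mpoly) = Poly_Mapping.single 0 N"
      unfolding N_def by (simp only: single_of_nat)
    have S: "(\<Sum>i\<in>set V. hl (i # V) (Suc k)) = Poly_Mapping.single 0 N * hl V (Suc k)"
      using hl_sum_ident[OF dV, of "Suc k"] unfolding eqN .
    have cN: "c * N = -1" using N0 by (simp add: c_def)
    have "Poly_Mapping.single 0 c * (\<Sum>i\<in>set V. hl (i # V) (Suc k)) = Poly_Mapping.single 0 (c * N) * hl V (Suc k)"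
      unfolding S by (simp add: mult.assoc[symmetric] mult_single)
    also have "\<dots> = - hl V (Suc k)" unfolding cN by (simp add: single_uminus)
    finally have "- hl V (Suc k) = Poly_Mapping.single 0 c * (\<Sum>i\<in>set V. hl (i # V) (Suc k))" by simp
    moreover have "hN V \<kappa> R (Suc k) (\<Sum>i\<in>set V. hl (i # V) (Suc k))"
    proof (rule hN_sum[OF g1])
      show "\<forall>x\<in>set V. hN V \<kappa> R (Suc k) (hl (x # V) (Suc k))"
        by (intro ballI hN.gen) (use mx kj jR in auto)
    qed simp
    ultimately have g2: "hN V \<kappa> R (Suc k) (- hl V (Suc k))" using hN_smult by metis
    show ?thesis unfolding ij e by (rule hN.add[OF g1 g2])
  qed
next
  case (add d p q)
  then show ?case by (simp add: distrib_left hN.add)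
next
  case (mon d p a c)
  have "hN V \<kappa> R (Suc d + deg a) (Poly_Mapping.single a c * (var j * p))"
    by (rule hN.mon) (use mon in auto)
  then show ?case by (simp add: algebra_simps)
qed

lemma hl_perm_lift:
  assumes "distinct V" "j \<in> set V"
  shows "hl (i # V) k = hl (j # i # removeAll j V) k"
proof -
  obtain xs ys where V: "V = xs @ j # ys" using split_list[OF assms(2)] by blast
  then have "j \<notin> set xs" "j \<notin> set ys" using assms(1) by auto
  then have r: "removeAll j V = xs @ ys" using V by simp
  have "hl (i # V) k = hl (i # j # xs @ ys) k"
    unfolding V by (rule hl_cong) (rule hl_move)
  also have "\<dots> = hl (j # i # xs @ ys) k" by (rule hl_swap)
  finally show ?thesis using r by simp
qed

lemma hN_lift:
  assumes dV: "distinct V" and jV: "j \<in> set V"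
  shows "hN (removeAll j V) \<kappa> R d p \<Longrightarrow>
    \<exists>q g. hN V \<kappa> R d q \<and> p = q + var j * g \<and>
      (\<forall>b\<in>Poly_Mapping.keys g. Suc (deg b) = d \<and> Poly_Mapping.keys b \<subseteq> set V)"
proof (induction rule: hN.induct)
  case (gen i k)
  have iV: "i \<in> set V" using gen(1) by simp
  have q: "hN V \<kappa> R k (hl (i # V) k)" by (rule hN.gen) (use iV gen in auto)
  show ?case
  proof (cases k)
    case 0
    then show ?thesis using q by (intro exI[of _ "hl (i # V) k"] exI[of _ 0]) auto
  next
    case (Suc k')
    let ?g = "- hl (j # i # removeAll j V) k'"
    have "hl (i # V) k = hl (i # removeAll j V) k + var j * hl (j # i # removeAll j V) k'"
      using hl_perm_lift[OF dV jV, of i k] Suc by (simp add: hl_Cons_Suc)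
    then have "hl (i # removeAll j V) k = hl (i # V) k + var j * ?g" by simp
    moreover have "\<forall>b\<in>Poly_Mapping.keys ?g. Suc (deg b) = k \<and> Poly_Mapping.keys b \<subseteq> set V"
      using hl_keys[of _ "j # i # removeAll j V" k'] Suc iV jV by (auto simp: keys_minus)
    ultimately show ?thesis using q by blast
  qed
next
  case (add d p q)
  then obtain q1 g1 q2 g2 where h: "hN V \<kappa> R d q1" "p = q1 + var j * g1"
      "\<forall>b\<in>Poly_Mapping.keys g1. Suc (deg b) = d \<and> Poly_Mapping.keys b \<subseteq> set V"
      "hN V \<kappa> R d q2" "q = q2 + var j * g2"
      "\<forall>b\<in>Poly_Mapping.keys g2. Suc (deg b) = d \<and> Poly_Mapping.keys b \<subseteq> set V" by blast
  have "hN V \<kappa> R d (q1 + q2)" using h by (simp add: hN.add)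
  moreover have "p + q = (q1 + q2) + var j * (g1 + g2)" using h by (simp add: algebra_simps)
  moreover have "\<forall>b\<in>Poly_Mapping.keys (g1 + g2). Suc (deg b) = d \<and> Poly_Mapping.keys b \<subseteq> set V"
    using h(3,6) keys_add[of g1 g2] by blast
  ultimately show ?case by blast
next
  case (mon d p a c)
  then obtain q0 g0 where h: "hN V \<kappa> R d q0" "p = q0 + var j * g0"
      "\<forall>b\<in>Poly_Mapping.keys g0. Suc (deg b) = d \<and> Poly_Mapping.keys b \<subseteq> set V" by blast
  have aV: "Poly_Mapping.keys a \<subseteq> set V" using mon(2) by auto
  have "hN V \<kappa> R (d + deg a) (Poly_Mapping.single a c * q0)" by (rule hN.mon[OF h(1) aV])
  moreover have "Poly_Mapping.single a c * p = Poly_Mapping.single a c * q0 + var j * (Poly_Mapping.single a c * g0)"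
    using h by (simp add: algebra_simps)
  moreover have "\<forall>b\<in>Poly_Mapping.keys (Poly_Mapping.single a c * g0). Suc (deg b) = d + deg a \<and> Poly_Mapping.keys b \<subseteq> set V"
  proof
    fix b assume "b \<in> Poly_Mapping.keys (Poly_Mapping.single a c * g0)"
    then obtain a' b' where "b = a' + b'" "a' \<in> Poly_Mapping.keys (Poly_Mapping.single a c)" "b' \<in> Poly_Mapping.keys g0"
      using keys_mult[of "Poly_Mapping.single a c" g0] by blast
    then show "Suc (deg b) = d + deg a \<and> Poly_Mapping.keys b \<subseteq> set V"
      using h(3) aV by (auto simp: deg_add keys_add_nat split: if_splits)
  qed
  ultimately show ?case by blast
qed

definition bnd :: "nat list \<Rightarrow> (nat \<Rightarrow> nat) \<Rightarrow> int" where
  "bnd V \<kappa> = (\<Sum>i\<in>set V. int (\<kappa> i) - 2) + 1"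

lemma hN_main:
  "distinct V \<Longrightarrow> (\<forall>i\<in>set V. 1 \<le> \<kappa> i \<and> \<kappa> i \<le> R) \<Longrightarrow> Poly_Mapping.keys a \<subseteq> set V \<Longrightarrow>
   bnd V \<kappa> \<le> int (deg a) \<Longrightarrow> hN V \<kappa> R (deg a) (Poly_Mapping.single a 1)"
proof (induction "sum \<kappa> (set V)" arbitrary: V \<kappa> a rule: less_induct)
  case less
  note dV = less.prems(1) and kb = less.prems(2) and aV = less.prems(3) and bd = less.prems(4)
  show ?case
  proof (cases "\<exists>i\<in>set V. \<kappa> i = 1")
    case True
    then obtain i where i: "i \<in> set V" "\<kappa> i = 1" by blast
    have "hN V \<kappa> R 0 (hl (i # V) 0)" by (rule hN.gen) (use i kb in auto)
    then have "hN V \<kappa> R (0 + deg a) (Poly_Mapping.single a 1 * hl (i # V) 0)"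
      by (rule hN.mon[OF _ aV])
    then show ?thesis by simp
  next
    case False
    then have k2: "\<forall>i\<in>set V. 2 \<le> \<kappa> i" using kb by force
    have Vne: "V \<noteq> []"
    proof
      assume "V = []"
      then have "a = 0" using aV by simp
      then show False using bd \<open>V = []\<close> by (simp add: bnd_def)
    qed
    define M where "M = Max (\<kappa> ` set V)"
    have "M \<in> \<kappa> ` set V" unfolding M_def using Vne by (intro Max_in) auto
    then obtain j where jV: "j \<in> set V" and jM: "\<kappa> j = M" by blast
    have mx: "\<forall>i\<in>set V. \<kappa> i \<le> \<kappa> j" using jM M_def by auto
    define \<kappa>' where "\<kappa>' = \<kappa>(j := \<kappa> j - 1)"
    have sum_split: "sum f (set V) = f j + sum f (set V - {j})" for f :: "nat \<Rightarrow> 'b::comm_monoid_add"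
      using jV by (simp add: sum.remove)
    have "sum \<kappa>' (set V) = (\<kappa> j - 1) + sum \<kappa> (set V - {j})"
      by (subst sum_split) (simp add: \<kappa>'_def)
    moreover have "sum \<kappa> (set V) = \<kappa> j + sum \<kappa> (set V - {j})" by (rule sum_split)
    ultimately have lt1: "sum \<kappa>' (set V) < sum \<kappa> (set V)" using k2 jV by auto
    have bnd': "bnd V \<kappa>' = bnd V \<kappa> - 1"
    proof -
      have "bnd V \<kappa>' = (int (\<kappa> j - 1) - 2) + (\<Sum>i\<in>set V - {j}. int (\<kappa> i) - 2) + 1"
        unfolding bnd_def by (subst sum_split) (simp add: \<kappa>'_def)
      moreover have "bnd V \<kappa> = (int (\<kappa> j) - 2) + (\<Sum>i\<in>set V - {j}. int (\<kappa> i) - 2) + 1"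
        unfolding bnd_def by (subst sum_split) simp
      ultimately show ?thesis using k2 jV by auto
    qed
    have kb': "\<forall>i\<in>set V. 1 \<le> \<kappa>' i \<and> \<kappa>' i \<le> R" using kb k2 by (auto simp: \<kappa>'_def)
    have step1: "hN V \<kappa> R (Suc (deg b)) (var j * Poly_Mapping.single b 1)"
      if bV: "Poly_Mapping.keys b \<subseteq> set V" and bb: "bnd V \<kappa> \<le> int (Suc (deg b))" for b
    proof -
      have "hN V \<kappa>' R (deg b) (Poly_Mapping.single b 1)"
        using less.hyps[OF lt1 dV kb' bV] bnd' bb by simp
      moreover have "2 \<le> \<kappa> j" "\<kappa> j \<le> R" using k2 jV kb by auto
      ultimately show ?thesis unfolding \<kappa>'_def using hN_step[OF dV jV mx] by blast
    qed
    show ?thesis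
    proof (cases "0 < Poly_Mapping.lookup a j")
      case True
      define b where "b = a - Poly_Mapping.single j 1"
      have ab: "a = Poly_Mapping.single j 1 + b"
        unfolding b_def using True
        by (intro poly_mapping_eqI) (auto simp: lookup_add lookup_minus lookup_single when_def)
      have da: "deg a = Suc (deg b)" using ab by (simp add: deg_add)
      have bV: "Poly_Mapping.keys b \<subseteq> set V" unfolding b_def using aV keys_minus_sub by blast
      have "var j * Poly_Mapping.single b 1 = Poly_Mapping.single a 1"
        using ab by (simp add: var_def mult_single)
      then show ?thesis using step1[OF bV] bd da by simp
    next
      case False
      let ?V' = "removeAll j V"
      have aV': "Poly_Mapping.keys a \<subseteq> set ?V'" using aV False by (auto simp: in_keys_iff)
      have "sum \<kappa> (set ?V') = sum \<kappa> (set V - {j})" by simp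
      then have lt2: "sum \<kappa> (set ?V') < sum \<kappa> (set V)" using sum_split[of \<kappa>] k2 jV by auto
      have "bnd ?V' \<kappa> = (\<Sum>i\<in>set V - {j}. int (\<kappa> i) - 2) + 1" by (simp add: bnd_def)
      moreover have "bnd V \<kappa> = (int (\<kappa> j) - 2) + (\<Sum>i\<in>set V - {j}. int (\<kappa> i) - 2) + 1"
        unfolding bnd_def by (subst sum_split) simp
      ultimately have "bnd ?V' \<kappa> \<le> bnd V \<kappa>" using k2 jV by auto
      then have "hN ?V' \<kappa> R (deg a) (Poly_Mapping.single a 1)"
        using less.hyps[OF lt2 _ _ aV'] dV kb bd by (auto simp: distinct_removeAll)
      then obtain q g where qg: "hN V \<kappa> R (deg a) q" "Poly_Mapping.single a 1 = q + var j * g"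
        "\<forall>b\<in>Poly_Mapping.keys g. Suc (deg b) = deg a \<and> Poly_Mapping.keys b \<subseteq> set V"
        using hN_lift[OF dV jV] by blast
      have "var j * g = (\<Sum>b\<in>Poly_Mapping.keys g. Poly_Mapping.single 0 (Poly_Mapping.lookup g b) * (var j * Poly_Mapping.single b 1))"
        by (subst poly_expand[of g]) (simp add: sum_distrib_left mult_single algebra_simps)
      moreover have "hN V \<kappa> R (deg a) (\<Sum>b\<in>Poly_Mapping.keys g. Poly_Mapping.single 0 (Poly_Mapping.lookup g b) * (var j * Poly_Mapping.single b 1))"
      proof (rule hN_sum[OF qg(1)])
        show "\<forall>x\<in>Poly_Mapping.keys g. hN V \<kappa> R (deg a) (Poly_Mapping.single 0 (Poly_Mapping.lookup g x) * (var j * Poly_Mapping.single x 1))"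
        proof
          fix b assume "b \<in> Poly_Mapping.keys g"
          then have "Suc (deg b) = deg a" "Poly_Mapping.keys b \<subseteq> set V" using qg(3) by auto
          then show "hN V \<kappa> R (deg a) (Poly_Mapping.single 0 (Poly_Mapping.lookup g b) * (var j * Poly_Mapping.single b 1))"
            using step1[of b] bd by (metis hN_smult)
        qed
      qed simp
      ultimately have "hN V \<kappa> R (deg a) (var j * g)" by simp
      then show ?thesis using qg by (metis hN.add)
    qed
  qed
qed



section \<open>Polynomial ideal generated by the power sums\<close>

inductive Pid :: "nat \<Rightarrow> mpoly \<Rightarrow> bool" for n where
  gen: "1 \<le> j \<Longrightarrow> j \<le> n \<Longrightarrow> Pid n (power_sum n j)"
| add: "Pid n p \<Longrightarrow> Pid n q \<Longrightarrow> Pid n (p + q)"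
| mult: "Pid n p \<Longrightarrow> vars c \<subseteq> {1..n} \<Longrightarrow> Pid n (c * p)"

lemma Pid_zero: "1 \<le> n \<Longrightarrow> Pid n 0"
  using Pid.mult[OF Pid.gen[of 1 n], of 0] by simp

lemma Pid_sum:
  assumes "1 \<le> n" "finite A" "\<forall>x\<in>A. Pid n (F x)"
  shows "Pid n (sum F A)"
  using assms(2,3)
proof (induction A rule: finite_induct)
  case empty then show ?case using Pid_zero[OF assms(1)] by simp
next
  case (insert x A) then show ?case by (simp add: Pid.add)
qed

lemma pl_power_sum: "pl [1..<Suc n] j = power_sum n j"
  unfolding pl_def power_sum_def by (simp only: set_upt atLeastLessThanSuc_atLeastAtMost)

lemma Pid_hl_full:
  assumes "1 \<le> d" "d \<le> n"
  shows "Pid n (hl [1..<Suc n] d)"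
proof -
  obtain k where d: "d = Suc k" using assms(1) by (cases d) auto
  let ?V = "[1..<Suc n]"
  have n1: "1 \<le> n" using assms by simp
  have "Pid n (\<Sum>j\<le>k. pl ?V (Suc j) * hl ?V (k - j))"
  proof (rule Pid_sum[OF n1])
    show "\<forall>j\<in>{..k}. Pid n (pl ?V (Suc j) * hl ?V (k - j))"
    proof
      fix j assume "j \<in> {..k}"
      then have "Pid n (power_sum n (Suc j))" using assms d by (intro Pid.gen) auto
      moreover have "vars (hl ?V (k - j)) \<subseteq> {1..n}"
        using vars_hl[of ?V "k - j"] by (auto simp: atLeastLessThanSuc_atLeastAtMost)
      ultimately show "Pid n (pl ?V (Suc j) * hl ?V (k - j))"
        using Pid.mult by (metis pl_power_sum mult.commute)
    qed
  qed simp
  then have "Pid n (of_nat (Suc k) * hl ?V (Suc k))" using newton[of ?V k] by simp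
  then have "Pid n (Poly_Mapping.single 0 (1 / of_nat (Suc k)) * (of_nat (Suc k) * hl ?V (Suc k)))"
    by (rule Pid.mult) (use vars_single[of 0] in auto)
  moreover have "Poly_Mapping.single 0 (1 / of_nat (Suc k)) * (of_nat (Suc k) * hl ?V (Suc k)) = hl ?V (Suc k)"
  proof -
    have "(of_nat (Suc k)::mpoly) = Poly_Mapping.single 0 (of_nat (Suc k))" by (simp only: single_of_nat)
    then have "Poly_Mapping.single 0 (1 / of_nat (Suc k)) * (of_nat (Suc k) * hl ?V (Suc k))
       = Poly_Mapping.single 0 ((1 / of_nat (Suc k)) * of_nat (Suc k)) * hl ?V (Suc k)"
      by (simp only: mult.assoc[symmetric] mult_single add_0)
    also have "(1 / of_nat (Suc k)) * (of_nat (Suc k)::complex) = 1"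
      by (simp del: of_nat_Suc)
    finally show ?thesis by simp
  qed
  ultimately show ?thesis using d by metis
qed

lemma Pid_hl_tail:
  assumes "1 \<le> t" "t \<le> n"
  shows "\<forall>d. t \<le> d \<longrightarrow> d \<le> n \<longrightarrow> Pid n (hl [t..<Suc n] d)"
  using assms
proof (induction t rule: dec_induct)
  case base then show ?case using Pid_hl_full by auto
next
  case (step t)
  show ?case
  proof (intro allI impI)
    fix d assume d: "Suc t \<le> d" "d \<le> n"
    then obtain d' where d': "d = Suc d'" by (cases d) auto
    have L: "[t..<Suc n] = t # [Suc t..<Suc n]" using step by (simp add: upt_rec)
    have "hl [Suc t..<Suc n] d = hl [t..<Suc n] d + (- var t) * hl [t..<Suc n] d'"
      unfolding L d' by (simp add: hl_Cons_Suc)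
    moreover have "Pid n (hl [t..<Suc n] d)" using step.IH step d by auto
    moreover have "Pid n (hl [t..<Suc n] d')" using step.IH step d d' by auto
    moreover have "vars (- var t) \<subseteq> {1..n}" using step by (simp add: vars_var)
    ultimately show "Pid n (hl [Suc t..<Suc n] d)" by (metis Pid.add Pid.mult)
  qed
qed

lemma Pid_hl_Y: "1 \<le> r \<Longrightarrow> r \<le> n \<Longrightarrow> Pid n (hl [r..<Suc n] r)"
  using Pid_hl_tail[of r n] by auto

section \<open>Forms\<close>

lemma sum_eq_single: "(\<And>x. x \<in> A \<Longrightarrow> x \<noteq> a \<Longrightarrow> f x = 0) \<Longrightarrow> finite A \<Longrightarrow> a \<in> A \<Longrightarrow> sum f A = f a"
  by (simp add: sum.remove sum.neutral)

lemma wsign_empty_left[simp]: "wsign {} T = 1"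
  by (simp add: wsign_def)

lemma wsign_empty_right[simp]: "wsign S {} = 1"
  by (simp add: wsign_def)

lemma wsign_sq: "of_int (wsign S T) * of_int (wsign S T) = (1::mpoly)"
proof -
  have "wsign S T * wsign S T = 1" unfolding wsign_def by (simp add: power_mult_distrib[symmetric])
  then show ?thesis by (metis of_int_1 of_int_mult)
qed

lemma wedge_zf_left:
  assumes "\<forall>U. infinite U \<longrightarrow> \<omega> U = 0"
  shows "wedge (zero_form c) \<omega> = (\<lambda>U. c * \<omega> U)"
proof
  fix U
  show "wedge (zero_form c) \<omega> U = c * \<omega> U"
  proof (cases "finite U")
    case True
    have "wedge (zero_form c) \<omega> U = (\<Sum>S\<in>Pow U. of_int (wsign S (U - S)) * zero_form c S * \<omega> (U - S))"
      by (simp add: wedge_def)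
    also have "\<dots> = of_int (wsign {} (U - {})) * zero_form c {} * \<omega> (U - {})"
      by (rule sum_eq_single) (auto simp: zero_form_def True)
    finally show ?thesis by (simp add: zero_form_def)
  next
    case False
    then show ?thesis using assms by (simp add: wedge_def)
  qed
qed

lemma wedge_zf_right:
  assumes "\<forall>U. infinite U \<longrightarrow> \<omega> U = 0"
  shows "wedge \<omega> (zero_form c) = (\<lambda>U. \<omega> U * c)"
proof
  fix U
  show "wedge \<omega> (zero_form c) U = \<omega> U * c"
  proof (cases "finite U")
    case True
    have "wedge \<omega> (zero_form c) U = (\<Sum>S\<in>Pow U. of_int (wsign S (U - S)) * \<omega> S * zero_form c (U - S))"
      by (simp add: wedge_def)
    also have "\<dots> = of_int (wsign U (U - U)) * \<omega> U * zero_form c (U - U)"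
      by (rule sum_eq_single) (auto simp: zero_form_def True)
    finally show ?thesis by (simp add: zero_form_def)
  next
    case False
    then show ?thesis using assms by (simp add: wedge_def)
  qed
qed

lemma ext_d_infinite: "infinite U \<Longrightarrow> ext_d \<omega> U = 0"
  by (simp add: ext_d_def)

lemma ext_d_zf: "ext_d (zero_form g) U = (if card U = 1 then pdiff (the_elem U) g else 0)"
proof (cases "finite U")
  case False
  then show ?thesis by (simp add: ext_d_def)
next
  case True
  show ?thesis
  proof (cases "card U = 1")
    case True
    then obtain i where U: "U = {i}" using card_1_singletonE by blast
    show ?thesis by (simp add: U ext_d_def zero_form_def)
  next
    case False
    have "ext_d (zero_form g) U = (\<Sum>i\<in>U. of_int (wsign {i} (U - {i})) * pdiff i (zero_form g (U - {i})))"
      by (simp add: ext_d_def)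
    also have "\<dots> = 0"
    proof (rule sum.neutral, rule ballI)
      fix i assume "i \<in> U"
      have "U - {i} \<noteq> {}"
      proof
        assume "U - {i} = {}"
        then have "U = {i}" using \<open>i \<in> U\<close> by blast
        then show False using False by simp
      qed
      then show "of_int (wsign {i} (U - {i})) * pdiff i (zero_form g (U - {i})) = 0"
        by (simp add: zero_form_def)
    qed
    finally show ?thesis using False by simp
  qed
qed

lemma ext_d_zf_add: "ext_d (zero_form (a + b)) = (\<lambda>U. ext_d (zero_form a) U + ext_d (zero_form b) U)"
  by (rule ext) (simp add: ext_d_zf pdiff_add)

lemma ext_d_zf_mult: "ext_d (zero_form (c * p)) =
   (\<lambda>U. wedge (ext_d (zero_form c)) (zero_form p) U + wedge (zero_form c) (ext_d (zero_form p)) U)"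
proof -
  have "wedge (ext_d (zero_form c)) (zero_form p) = (\<lambda>U. ext_d (zero_form c) U * p)"
    by (rule wedge_zf_right) (simp add: ext_d_infinite)
  moreover have "wedge (zero_form c) (ext_d (zero_form p)) = (\<lambda>U. c * ext_d (zero_form p) U)"
    by (rule wedge_zf_left) (simp add: ext_d_infinite)
  ultimately show ?thesis
    by (intro ext) (simp add: ext_d_zf pdiff_mult)
qed

lemma zf_infinite: "infinite U \<Longrightarrow> zero_form c U = 0"
  by (auto simp: zero_form_def)

lemma zero_form_add: "zero_form (a + b) = (\<lambda>U. zero_form a U + zero_form b U)"
  by (auto simp: zero_form_def)

lemma zero_form_mult: "zero_form (c * p) = wedge (zero_form c) (zero_form p)"
  by (subst wedge_zf_left) (auto simp: zero_form_def)

lemma OmegaI: "(\<And>S. \<omega> S \<noteq> 0 \<Longrightarrow> S \<subseteq> {1..n} \<and> vars (\<omega> S) \<subseteq> {1..n}) \<Longrightarrow> \<omega> \<in> Omega n"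
  unfolding Omega_def vars_def by blast

lemma Omega_zf: "vars c \<subseteq> {1..n} \<Longrightarrow> zero_form c \<in> Omega n"
  by (rule OmegaI) (auto simp: zero_form_def split: if_splits)

lemma Omega_dzf:
  assumes "vars c \<subseteq> {1..n}"
  shows "ext_d (zero_form c) \<in> Omega n"
proof (rule OmegaI)
  fix S assume S: "ext_d (zero_form c) S \<noteq> 0"
  then have c1: "card S = 1" and pd: "pdiff (the_elem S) c \<noteq> 0" by (auto simp: ext_d_zf split: if_splits)
  then obtain i where Si: "S = {i}" using card_1_singletonE by blast
  have "i \<in> vars c" using pd Si pdiff_nonzero_var by auto
  moreover have "vars (pdiff i c) \<subseteq> vars c" by (rule vars_pdiff)
  ultimately show "S \<subseteq> {1..n} \<and> vars (ext_d (zero_form c) S) \<subseteq> {1..n}"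
    using assms Si by (auto simp: ext_d_zf)
qed

lemma Omega_theta: "S0 \<subseteq> {1..n} \<Longrightarrow> (\<lambda>T. if T = S0 then 1 else 0) \<in> Omega n"
  by (rule OmegaI) (auto split: if_splits)

lemma Pid_forms:
  assumes "Pid n g"
  shows "zero_form g \<in> I_n n \<and> ext_d (zero_form g) \<in> I_n n"
  using assms
proof (induction rule: Pid.induct)
  case (gen j)
  then show ?case unfolding I_n_def by (auto intro: gen_ideal.gen)
next
  case (add p q)
  have "zero_form (p + q) \<in> I_n n"
    using add unfolding I_n_def by (subst zero_form_add) (auto intro: gen_ideal.add)
  moreover have "ext_d (zero_form (p + q)) \<in> I_n n"
    using add unfolding I_n_def by (subst ext_d_zf_add) (auto intro: gen_ideal.add)
  ultimately show ?case by simp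
next
  case (mult p c)
  have z: "zero_form (c * p) \<in> I_n n"
    unfolding zero_form_mult I_n_def
    using mult Omega_zf[OF mult(2)] by (auto simp: I_n_def intro: gen_ideal.lmult)
  have d: "ext_d (zero_form (c * p)) \<in> I_n n"
    unfolding ext_d_zf_mult I_n_def
    using mult Omega_zf[OF mult(2)] Omega_dzf[OF mult(2)]
    by (auto simp: I_n_def intro!: gen_ideal.add gen_ideal.lmult)
  show ?case using z d by simp
qed

lemma theta_deriv:
  assumes P: "Pid n g" and gY: "vars g \<subseteq> Ys" and Yn: "Ys \<subseteq> {1..n}" and fY: "finite Ys" and iY: "i \<in> Ys"
  shows "(\<lambda>S. if S = Ys then pdiff i g else 0) \<in> I_n n"
proof -
  let ?E = "ext_d (zero_form g)"
  let ?\<theta> = "\<lambda>T. if T = Ys - {i} then (1::mpoly) else 0"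
  let ?w = "of_int (wsign {i} (Ys - {i})) :: mpoly"
  have key: "S = {i} \<and> U = Ys"
    if "S \<subseteq> U" "?E S \<noteq> 0" "?\<theta> (U - S) \<noteq> 0" for S U
  proof -
    from that(2) have c1: "card S = 1" and pd: "pdiff (the_elem S) g \<noteq> 0" by (auto simp: ext_d_zf split: if_splits)
    then obtain j where Sj: "S = {j}" using card_1_singletonE by blast
    have jY: "j \<in> Ys" using pd Sj pdiff_nonzero_var gY by auto
    have UY: "U - {j} = Ys - {i}" using that(3) Sj by (auto split: if_splits)
    have jU: "j \<in> U" using that(1) Sj by auto
    have "j = i" using UY jY by blast
    then show ?thesis using UY jU iY Sj by blast
  qed
  have W: "wedge ?E ?\<theta> = (\<lambda>U. if U = Ys then ?w * pdiff i g else 0)"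
  proof
    fix U
    show "wedge ?E ?\<theta> U = (if U = Ys then ?w * pdiff i g else 0)"
    proof (cases "finite U")
      case False
      then show ?thesis using fY by (auto simp: wedge_def)
    next
      case True
      have "wedge ?E ?\<theta> U = (\<Sum>S\<in>Pow U. of_int (wsign S (U - S)) * ?E S * ?\<theta> (U - S))"
        by (simp add: wedge_def)
      show ?thesis
      proof (cases "U = Ys")
        case True
        have "(\<Sum>S\<in>Pow U. of_int (wsign S (U - S)) * ?E S * ?\<theta> (U - S))
              = of_int (wsign {i} (U - {i})) * ?E {i} * ?\<theta> (U - {i})"
        proof (rule sum_eq_single)
          fix S assume "S \<in> Pow U" "S \<noteq> {i}"
          then show "of_int (wsign S (U - S)) * ?E S * ?\<theta> (U - S) = 0"
            using key[of S U] by auto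
        qed (use True iY fY in auto)
        then show ?thesis using True by (simp add: wedge_def ext_d_zf)
      next
        case False
        have "(\<Sum>S\<in>Pow U. of_int (wsign S (U - S)) * ?E S * ?\<theta> (U - S)) = 0"
        proof (rule sum.neutral, rule ballI)
          fix S assume "S \<in> Pow U"
          then show "of_int (wsign S (U - S)) * ?E S * ?\<theta> (U - S) = 0"
            using key[of S U] False by auto
        qed
        then show ?thesis using False by (simp add: wedge_def)
      qed
    qed
  qed
  have gn: "vars g \<subseteq> {1..n}" using gY Yn by blast
  have "wedge ?E ?\<theta> \<in> I_n n"
    using Pid_forms[OF P] Omega_theta[of "Ys - {i}" n] Yn unfolding I_n_def
    by (auto intro: gen_ideal.rmult)
  then have "wedge (zero_form ?w) (wedge ?E ?\<theta>) \<in> I_n n"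
    unfolding I_n_def by (rule gen_ideal.lmult) (rule Omega_zf, simp add: vars_of_int)
  moreover have "wedge (zero_form ?w) (wedge ?E ?\<theta>) = (\<lambda>S. if S = Ys then pdiff i g else 0)"
    unfolding W by (subst wedge_zf_left) (use fY in \<open>auto simp: mult.assoc[symmetric] wsign_sq\<close>)
  ultimately show ?thesis by simp
qed

lemma gen_ideal_sum:
  "finite A \<Longrightarrow> (\<forall>a\<in>A. F a \<in> gen_ideal n G) \<longrightarrow> (\<lambda>U. \<Sum>a\<in>A. F a U) \<in> gen_ideal n G"
proof (induction A rule: finite_induct)
  case empty then show ?case by (simp add: gen_ideal.zero)
next
  case (insert x A)
  then show ?case using gen_ideal.add[of "F x" n G "\<lambda>U. \<Sum>a\<in>A. F a U"] by simp
qed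

lemma setY: "set [r..<Suc n] = {r..n}"
  by (simp only: set_upt atLeastLessThanSuc_atLeastAtMost)

lemma transfer_forms:
  assumes r1: "1 \<le> r" and rn: "r \<le> n"
  shows "hN [r..<Suc n] (\<lambda>_. r) r d p \<Longrightarrow> (\<lambda>S. if S = {r..n} then p else 0) \<in> I_n n"
proof (induction rule: hN.induct)
  case (gen i k)
  then have k: "Suc k = r" by simp
  have iY: "i \<in> {r..n}" using gen(1) by auto
  have "pdiff i (hl [r..<Suc n] (Suc k)) = hl (i # [r..<Suc n]) k"
    by (rule pdiff_hl) (use gen(1) in auto)
  moreover have "(\<lambda>S. if S = {r..n} then pdiff i (hl [r..<Suc n] r) else 0) \<in> I_n n"
  proof (rule theta_deriv)
    show "Pid n (hl [r..<Suc n] r)" by (rule Pid_hl_Y[OF r1 rn])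
    show "vars (hl [r..<Suc n] r) \<subseteq> {r..n}"
      using vars_hl[of "[r..<Suc n]" r] unfolding setY .
  qed (use r1 iY in auto)
  ultimately show ?case using k by metis
next
  case (add d p q)
  have "(\<lambda>S. if S = {r..n} then p + q else 0) =
        (\<lambda>U. (if U = {r..n} then p else 0) + (if U = {r..n} then q else 0))" by auto
  then show ?case using add unfolding I_n_def by (simp add: gen_ideal.add)
next
  case (mon d p a c)
  have "(\<lambda>S. if S = {r..n} then Poly_Mapping.single a c * p else 0) =
        wedge (zero_form (Poly_Mapping.single a c)) (\<lambda>S. if S = {r..n} then p else 0)"
    by (subst wedge_zf_left) auto
  moreover have "zero_form (Poly_Mapping.single a c) \<in> Omega n"
    using mon(2) vars_single[of a c] r1 unfolding setY by (intro Omega_zf) auto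
  ultimately show ?case using mon(3) unfolding I_n_def by (simp add: gen_ideal.lmult)
qed



theorem corollary19:
  fixes n r l :: nat and f :: mpoly
  assumes "1 \<le> r" and "r \<le> n"
    and "homogeneous_in {r..n} l f"
    and "int l > (int r - 2) * (int n - int r + 1)"
  shows "(\<lambda>S. if S = {r..n} then f else 0) \<in> I_n n"
proof -
  let ?Y = "[r..<Suc n]"
  let ?k = "\<lambda>_::nat. r"
  have dY: "distinct ?Y" by simp
  have cY: "card {r..n} = Suc n - r" by simp
  have "bnd ?Y ?k = of_nat (card {r..n}) * (int r - 2) + 1"
    unfolding bnd_def setY by simp
  also have "\<dots> = (int r - 2) * (int n - int r + 1) + 1"
    using assms(2) by (simp add: cY of_nat_diff)
  finally have bY: "bnd ?Y ?k = (int r - 2) * (int n - int r + 1) + 1" .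
  have mono: "(\<lambda>S. if S = {r..n} then Poly_Mapping.single a (Poly_Mapping.lookup f a) else 0) \<in> I_n n"
    if a: "a \<in> Poly_Mapping.keys f" for a
  proof -
    have ka: "Poly_Mapping.keys a \<subseteq> set ?Y" and da: "deg a = l"
      using assms(3) a unfolding homogeneous_in_def deg_def setY by auto
    have "hN ?Y ?k r (deg a) (Poly_Mapping.single a 1)"
      by (rule hN_main[OF dY _ ka]) (use assms(1) bY da assms(4) in auto)
    then have "hN ?Y ?k r (deg a) (Poly_Mapping.single 0 (Poly_Mapping.lookup f a) * Poly_Mapping.single a 1)"
      by (rule hN_smult)
    then have "hN ?Y ?k r (deg a) (Poly_Mapping.single a (Poly_Mapping.lookup f a))"
      by (simp add: mult_single)
    then show ?thesis by (rule transfer_forms[OF assms(1,2)])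
  qed
  define F where "F a = (\<lambda>S. if S = {r..n} then Poly_Mapping.single a (Poly_Mapping.lookup f a) else (0::mpoly))" for a
  have "\<forall>a\<in>Poly_Mapping.keys f. F a \<in> I_n n" using mono unfolding F_def by blast
  then have "(\<lambda>U. \<Sum>a\<in>Poly_Mapping.keys f. F a U) \<in> I_n n"
    unfolding I_n_def by (rule gen_ideal_sum[OF finite_keys, THEN mp])
  moreover have "(\<lambda>U. \<Sum>a\<in>Poly_Mapping.keys f. F a U) = (\<lambda>S. if S = {r..n} then f else 0)"
    by (rule ext) (simp add: F_def poly_expand[of f, symmetric])
  ultimately show ?thesis by simp
qed


end
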